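(* Let $\mu$ be strict and $\alpha\in\mathcal Q(\mu,\overline\mu)$, and let $m=m(\alpha)$. Then $\alpha$ can be written uniquely as $$\alpha=(b_1^m,b_2,b_3,\ldots)+(w^m)$$ with $w\ge0$, $b_1>b_2$, and $(b_1^m,b_2,b_3,\ldots)\in\mathcal Q(\mu,\mu+(1))$.
   Context: Partitions are weakly decreasing sequences of nonnegative integers with finitely many nonzero parts, identified with Ferrers boards. $\alpha$ contains $\mu$ if deleting some rows and some columns of the Ferrers board of $\alpha$ and top/left-justifying yields $\mu$; otherwise $\alpha$ avoids $\mu$. Strict: positive parts distinct. $m(\alpha)$ is the multiplicity of the largest part of $\alpha$. $\alpha+\beta$ is the componentwise sum; $(w^m)$ has $m$ parts equal to $w$. $\overline\mu=(\mu_1+1,\mu_1,\mu_2,\ldots)$. $\mathcal Q(\tau,\mu)$ is the set of partitions of positive weight containing $\tau$ and avoiding $\mu$. *)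

theory Defs
  imports Main
begin

text \<open>Partitions are represented as functions nat => nat (part i = the (i+1)-st part),
  weakly decreasing with finitely many nonzero parts.\<close>

definition partition :: "(nat \<Rightarrow> nat) \<Rightarrow> bool" where
  "partition a \<longleftrightarrow> (\<forall>i j. i \<le> j \<longrightarrow> a j \<le> a i) \<and> finite {i. a i \<noteq> 0}"

definition strict :: "(nat \<Rightarrow> nat) \<Rightarrow> bool" where
  "strict a \<longleftrightarrow> (\<forall>i j. i \<noteq> j \<and> 0 < a i \<and> 0 < a j \<longrightarrow> a i \<noteq> a j)"

definition weight :: "(nat \<Rightarrow> nat) \<Rightarrow> nat" where
  "weight a = (\<Sum>i\<in>{i. a i \<noteq> 0}. a i)"

definition board :: "(nat \<Rightarrow> nat) \<Rightarrow> (nat \<times> nat) set" where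
  "board a = {(i, j). j < a i}"

text \<open>Keep rows R and columns C (delete the others) and top/left-justify.\<close>
definition contains :: "(nat \<Rightarrow> nat) \<Rightarrow> (nat \<Rightarrow> nat) \<Rightarrow> bool" where
  "contains a u \<longleftrightarrow> (\<exists>R C :: nat set.
     (\<lambda>(i, j). (card {r\<in>R. r < i}, card {c\<in>C. c < j})) ` (board a \<inter> (R \<times> C)) = board u)"

definition Q :: "(nat \<Rightarrow> nat) \<Rightarrow> (nat \<Rightarrow> nat) \<Rightarrow> (nat \<Rightarrow> nat) set" where
  "Q t u = {a. partition a \<and> 0 < weight a \<and> contains a t \<and> \<not> contains a u}"

definition mult :: "(nat \<Rightarrow> nat) \<Rightarrow> nat" where
  "mult a = card {i. a i = a 0}"

definition psum :: "(nat \<Rightarrow> nat) \<Rightarrow> (nat \<Rightarrow> nat) \<Rightarrow> (nat \<Rightarrow> nat)" where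
  "psum a b = (\<lambda>i. a i + b i)"

definition rect :: "nat \<Rightarrow> nat \<Rightarrow> (nat \<Rightarrow> nat)" where
  "rect w m = (\<lambda>i. if i < m then w else 0)"

definition bar :: "(nat \<Rightarrow> nat) \<Rightarrow> (nat \<Rightarrow> nat)" where
  "bar u = (\<lambda>i. if i = 0 then u 0 + 1 else u (i - 1))"

end

theory Submission imports Defs begin

definition cnt :: "nat set \<Rightarrow> nat \<Rightarrow> nat" where
  "cnt C y = card {c\<in>C. c < y}"

definition chain :: "(nat \<Rightarrow> nat) \<Rightarrow> (nat \<Rightarrow> nat) \<Rightarrow> bool" where
  "chain a u \<longleftrightarrow> (\<exists>x. (\<forall>i. x i \<in> range a) \<and> (\<forall>i. x (Suc i) + u i \<le> x i + u (Suc i)))"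

lemma cnt_fin: "finite {c\<in>C. c < (y::nat)}"
  by (rule finite_subset[of _ "{..<y}"]) auto

lemma cnt_Suc: "cnt C (Suc y) = (if y \<in> C then Suc (cnt C y) else cnt C y)"
proof -
  have "{c\<in>C. c < Suc y} = (if y\<in>C then insert y {c\<in>C. c<y} else {c\<in>C. c<y})"
    using less_Suc_eq by auto
  then show ?thesis using cnt_fin[of C y] by (simp add: cnt_def)
qed

lemma cnt_le: "cnt C y \<le> y"
proof -
  have "card {c\<in>C. c < y} \<le> card {..<y}" by (rule card_mono) auto
  then show ?thesis by (simp add: cnt_def)
qed

lemma cnt_image: "cnt C ` {c\<in>C. c<y} = {..<cnt C y}"
proof (induction y)
  case 0
  then show ?case by (simp add: cnt_def)
next
  case (Suc y)
  show ?case
  proof (cases "y \<in> C")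
    case True
    have "{c\<in>C. c < Suc y} = insert y {c\<in>C. c<y}" using True by auto
    then show ?thesis using Suc True by (simp add: cnt_Suc lessThan_Suc)
  next
    case False
    have "{c\<in>C. c < Suc y} = {c\<in>C. c<y}" using False less_Suc_eq by auto
    then show ?thesis using Suc False by (simp add: cnt_Suc)
  qed
qed

lemma cnt_mono: "y \<le> y' \<Longrightarrow> cnt C y \<le> cnt C y'"
  unfolding cnt_def by (rule card_mono[OF cnt_fin]) auto

lemma cnt_strict: "r \<in> R \<Longrightarrow> r < r' \<Longrightarrow> cnt R r < cnt R r'"
  unfolding cnt_def by (rule psubset_card_mono[OF cnt_fin]) auto

lemma cnt_diff: "p \<le> q \<Longrightarrow> cnt C q \<le> cnt C p + (q - p)"
proof -
  assume "p \<le> q"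
  have "{c\<in>C. c < q} \<subseteq> {c\<in>C. c < p} \<union> {p..<q}" by auto
  then have "card {c\<in>C. c < q} \<le> card ({c\<in>C. c < p} \<union> {p..<q})"
    by (intro card_mono) (auto simp: cnt_fin)
  also have "\<dots> \<le> card {c\<in>C. c < p} + card {p..<q}" by (rule card_Un_le)
  finally show ?thesis by (simp add: cnt_def)
qed

lemma partition_mono: "partition a \<Longrightarrow> i \<le> j \<Longrightarrow> a j \<le> a i"
  unfolding partition_def by blast

lemma partition_zero: "partition a \<Longrightarrow> \<exists>i\<ge>m. a i = 0"
proof (rule ccontr)
  assume p: "partition a" and n: "\<not> (\<exists>i\<ge>m. a i = 0)"
  then have "{m..} \<subseteq> {i. a i \<noteq> 0}" by auto
  moreover have "finite {i. a i \<noteq> 0}" using p by (simp add: partition_def)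
  ultimately show False using finite_subset infinite_Ici by blast
qed

lemma contains_chain:
  assumes pa: "partition a" and pu: "partition u" and c: "contains a u"
  shows "chain a u"
proof -
  obtain R C where E: "(\<lambda>(i, j). (cnt R i, cnt C j)) ` (board a \<inter> (R \<times> C)) = board u"
    using c unfolding contains_def cnt_def by blast
  have ex: "\<exists>r\<in>R. cnt R r = i" if "0 < u i" for i
  proof -
    have "(i, 0) \<in> board u" using that by (simp add: board_def)
    then have "(i, 0) \<in> (\<lambda>(i, j). (cnt R i, cnt C j)) ` (board a \<inter> (R \<times> C))" using E by simp
    then show ?thesis by auto
  qed
  define r where "r i = (SOME r. r\<in>R \<and> cnt R r = i)" for i
  have r: "r i \<in> R \<and> cnt R (r i) = i" if "0 < u i" for i
    unfolding r_def using ex[OF that] by (metis (mono_tags, lifting) someI_ex)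
  have inj: "inj_on (cnt R) R"
    unfolding inj_on_def by (metis cnt_strict less_irrefl nat_neq_iff)
  have ueq: "u i = cnt C (a (r i))" if "0 < u i" for i
  proof -
    have "{..<u i} = {j. (i,j) \<in> board u}" by (auto simp: board_def)
    also have "\<dots> = cnt C ` {c\<in>C. c < a (r i)}"
    proof
      show "{j. (i,j) \<in> board u} \<subseteq> cnt C ` {c\<in>C. c < a (r i)}"
      proof
        fix j assume "j \<in> {j. (i,j) \<in> board u}"
        then have "(i,j) \<in> (\<lambda>(i, j). (cnt R i, cnt C j)) ` (board a \<inter> (R \<times> C))" using E by simp
        then obtain r' c where h: "r' \<in> R" "c \<in> C" "c < a r'" "cnt R r' = i" "cnt C c = j"
          by (auto simp: board_def)
        then have "r' = r i" using r[OF that] inj by (metis inj_on_eq_iff)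
        then show "j \<in> cnt C ` {c\<in>C. c < a (r i)}" using h by auto
      qed
    next
      show "cnt C ` {c\<in>C. c < a (r i)} \<subseteq> {j. (i,j) \<in> board u}"
      proof
        fix j assume "j \<in> cnt C ` {c\<in>C. c < a (r i)}"
        then obtain c where h: "c \<in> C" "c < a (r i)" "j = cnt C c" by auto
        then have "(r i, c) \<in> board a \<inter> (R \<times> C)" using r[OF that] by (auto simp: board_def)
        then have "(cnt R (r i), cnt C c) \<in> board u" using E by force
        then show "j \<in> {j. (i,j) \<in> board u}" using h r[OF that] by simp
      qed
    qed
    also have "\<dots> = {..<cnt C (a (r i))}" by (rule cnt_image)
    finally show ?thesis by simp
  qed
  define x where "x i = (if 0 < u i then a (r i) else 0)" for i
  obtain z where z: "a z = 0" using partition_zero[OF pa, of 0] by blast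
  show ?thesis unfolding chain_def
  proof (intro exI conjI allI)
    fix i show "x i \<in> range a" unfolding x_def using z by (auto intro: range_eqI[of _ _ z])
  next
    fix i
    have um: "u (Suc i) \<le> u i" using partition_mono[OF pu] by simp
    show "x (Suc i) + u i \<le> x i + u (Suc i)"
    proof (cases "0 < u (Suc i)")
      case True
      then have ui: "0 < u i" using um by simp
      have "r i < r (Suc i)"
      proof (rule ccontr)
        assume "\<not> r i < r (Suc i)"
        then have "cnt R (r (Suc i)) \<le> cnt R (r i)" by (intro cnt_mono) simp
        then show False using r[OF ui] r[OF True] by simp
      qed
      then have le: "a (r (Suc i)) \<le> a (r i)" using partition_mono[OF pa] by simp
      show ?thesis using cnt_diff[OF le, of C] ueq[OF ui] ueq[OF True] ui True le
        by (simp add: x_def)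
    next
      case False
      then show ?thesis
        using cnt_le[of C "a (r i)"] ueq[of i] by (auto simp: x_def)
    qed
  qed
qed

lemma chain_contains:
  assumes pa: "partition a" and pu: "partition u" and su: "strict u" and ch: "chain a u"
  shows "contains a u"
proof -
  obtain x where xr: "\<And>i. x i \<in> range a" and xi: "\<And>i. x (Suc i) + u i \<le> x i + u (Suc i)"
    using ch unfolding chain_def by blast
  have "finite {i. u i \<noteq> 0}" using pu by (simp add: partition_def)
  then obtain N where N0: "\<forall>i\<in>{i. u i \<noteq> 0}. i < N" using finite_nat_set_iff_bounded by blast
  then have N: "\<And>i. N \<le> i \<Longrightarrow> u i = 0" by force
  have um: "\<And>i j. j \<le> i \<Longrightarrow> u i \<le> u j" using partition_mono[OF pu] by blast
  have T: "x i + u j \<le> x j + u i" if "j \<le> i" for i j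
    using that
  proof (induct i rule: dec_induct)
    case base then show ?case by simp
  next
    case (step n)
    then show ?case using xi[of n] by linarith
  qed
  have ux: "u i \<le> x i" for i
  proof (cases "i \<le> N")
    case True then show ?thesis using T[OF True] N[of N] by simp
  next
    case False then show ?thesis using N[of i] by simp
  qed
  have xdec: "x j < x i" if "i < j" "0 < u j" for i j
  proof -
    have "u i \<noteq> u j" using su that unfolding strict_def by (metis less_irrefl less_le_trans um[of i j] less_imp_le)
    then have "u j < u i" using um[of i j] that by simp
    then show ?thesis using T[of i j] that by simp
  qed
  have upos: "0 < u i" if "0 < u j" "i \<le> j" for i j using um[OF that(2)] that by simp
  define r where "r i = (SOME j. a j = x i)" for i
  have ar: "a (r i) = x i" for i unfolding r_def using xr[of i] by (metis (mono_tags, lifting) rangeE someI_ex)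
  have rmono: "r i < r j" if "i < j" "0 < u j" for i j
  proof (rule ccontr)
    assume "\<not> r i < r j"
    then have "a (r i) \<le> a (r j)" using partition_mono[OF pa] by simp
    then show False using xdec[OF that] ar by simp
  qed
  define R where "R = r ` {i. 0 < u i}"
  have cR: "cnt R (r i) = i" if "0 < u i" for i
  proof -
    have "{r'\<in>R. r' < r i} = r ` {..<i}"
    proof
      show "{r'\<in>R. r' < r i} \<subseteq> r ` {..<i}"
      proof
        fix r' assume "r' \<in> {r'\<in>R. r' < r i}"
        then obtain j where j: "0 < u j" "r' = r j" "r j < r i" unfolding R_def by auto
        have "j < i"
        proof (rule ccontr)
          assume "\<not> j < i"
          then have "j = i \<or> i < j" by auto
          then show False using j rmono[of i j] by auto
        qed
        then show "r' \<in> r ` {..<i}" using j by auto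
      qed
    next
      show "r ` {..<i} \<subseteq> {r'\<in>R. r' < r i}"
        using rmono that upos unfolding R_def by fastforce
    qed
    moreover have "inj_on r {..<i}"
      unfolding inj_on_def
      by (metis lessThan_iff less_irrefl linorder_neqE_nat rmono that upos less_imp_le)
    ultimately show ?thesis by (simp add: cnt_def card_image)
  qed
  define g where "g y i = u i - (x i - y)" for y i
  define f where "f y = Max ((g y) ` {..N})" for y
  have fin: "finite ((g y) ` {..N})" "(g y) ` {..N} \<noteq> {}" for y by auto
  have f0: "f 0 = 0"
  proof -
    have "(g 0) ` {..N} = {0}" using ux unfolding g_def by auto
    then show ?thesis by (simp add: f_def)
  qed
  have fstep: "f y \<le> f (Suc y) \<and> f (Suc y) \<le> Suc (f y)" for y
  proof
    have "f y \<in> g y ` {..N}" unfolding f_def by (rule Max_in[OF fin])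
    then obtain i where i: "i \<le> N" "f y = g y i" by auto
    have "g y i \<le> g (Suc y) i" unfolding g_def by arith
    also have "\<dots> \<le> f (Suc y)" unfolding f_def using i fin by (intro Max_ge) auto
    finally show "f y \<le> f (Suc y)" using i by simp
  next
    have "\<forall>i\<in>{..N}. g (Suc y) i \<le> Suc (f y)"
    proof
      fix i assume i: "i \<in> {..N}"
      have "g y i \<le> f y" unfolding f_def using i fin by (intro Max_ge) auto
      moreover have "g (Suc y) i \<le> Suc (g y i)" unfolding g_def by arith
      ultimately show "g (Suc y) i \<le> Suc (f y)" by simp
    qed
    then show "f (Suc y) \<le> Suc (f y)" unfolding f_def using fin by (simp add: Max_le_iff)
  qed
  define C where "C = {c. f (Suc c) = Suc (f c)}"
  have cntC: "cnt C y = f y" for y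
  proof (induction y)
    case 0 then show ?case using f0 by (simp add: cnt_def)
  next
    case (Suc y)
    then show ?case using fstep[of y] by (auto simp: cnt_Suc C_def)
  qed
  have fx: "f (x i) = u i" if "0 < u i" for i
  proof -
    have iN: "i \<le> N" using N[of i] that by (cases "N \<le> i") auto
    show ?thesis unfolding f_def
    proof (rule Max_eqI[OF fin(1)])
      fix z assume "z \<in> (g (x i)) ` {..N}"
      then obtain j where j: "z = g (x i) j" by auto
      show "z \<le> u i"
      proof (cases "j \<le> i")
        case True
        then show ?thesis using T[OF True] j unfolding g_def by arith
      next
        case False
        then have "u j \<le> u i" using partition_mono[OF pu, of i j] by simp
        then show ?thesis using j unfolding g_def by simp
      qed
    next
      show "u i \<in> (g (x i)) ` {..N}" using iN unfolding g_def by force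
    qed
  qed
  have H: "(\<lambda>(i, j). (cnt R i, cnt C j)) ` (board a \<inter> (R \<times> C)) = board u"
  proof
    show "(\<lambda>(i, j). (cnt R i, cnt C j)) ` (board a \<inter> (R \<times> C)) \<subseteq> board u"
    proof
      fix p assume "p \<in> (\<lambda>(i, j). (cnt R i, cnt C j)) ` (board a \<inter> (R \<times> C))"
      then obtain r' c where h: "r' \<in> R" "c \<in> C" "c < a r'" "p = (cnt R r', cnt C c)"
        by (auto simp: board_def)
      then obtain i where i: "0 < u i" "r' = r i" unfolding R_def by auto
      have "cnt C c \<in> cnt C ` {c\<in>C. c < a (r i)}" using h i by auto
      then have "cnt C c < cnt C (a (r i))" using cnt_image by auto
      then have "cnt C c < u i" using cntC fx[OF i(1)] ar by simp
      then show "p \<in> board u" using h i cR by (simp add: board_def)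
    qed
  next
    show "board u \<subseteq> (\<lambda>(i, j). (cnt R i, cnt C j)) ` (board a \<inter> (R \<times> C))"
    proof
      fix p assume "p \<in> board u"
      then obtain i j where p: "p = (i,j)" "j < u i" by (auto simp: board_def)
      then have ui: "0 < u i" by simp
      have "j \<in> {..<cnt C (a (r i))}" using p cntC fx[OF ui] ar by simp
      then obtain c where c: "c \<in> C" "c < a (r i)" "j = cnt C c" using cnt_image[of C "a (r i)"] by auto
      have "(r i, c) \<in> board a \<inter> (R \<times> C)" using c ui unfolding R_def board_def by auto
      moreover have "p = (\<lambda>(i, j). (cnt R i, cnt C j)) (r i, c)" using p c cR[OF ui] by simp
      ultimately show "p \<in> (\<lambda>(i, j). (cnt R i, cnt C j)) ` (board a \<inter> (R \<times> C))" by blast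
    qed
  qed
  show ?thesis unfolding contains_def using H unfolding cnt_def by blast
qed

definition repl :: "(nat \<Rightarrow> nat) \<Rightarrow> nat \<Rightarrow> nat \<Rightarrow> nat \<Rightarrow> nat" where
  "repl a m v = (\<lambda>i. if i < m then v else a i)"

lemma repl_range: "0 < m \<Longrightarrow> z \<in> range (repl a m v) \<longleftrightarrow> z = v \<or> (\<exists>j\<ge>m. z = a j)"
proof
  assume "z \<in> range (repl a m v)"
  then obtain i where "z = repl a m v i" by auto
  then show "z = v \<or> (\<exists>j\<ge>m. z = a j)" unfolding repl_def
    by (cases "i < m") (auto simp: not_less)
next
  assume m: "0 < m" and d: "z = v \<or> (\<exists>j\<ge>m. z = a j)"
  show "z \<in> range (repl a m v)"
    using d
  proof (elim disjE)
    assume "z = v" then have "z = repl a m v 0" using m by (simp add: repl_def)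
    then show ?thesis by blast
  next
    assume "\<exists>j\<ge>m. z = a j"
    then obtain j where "j \<ge> m" "z = a j" by blast
    then have "z = repl a m v j" by (simp add: repl_def)
    then show ?thesis by blast
  qed
qed

lemma repl_le: "partition a \<Longrightarrow> a m \<le> v \<Longrightarrow> 0 < m \<Longrightarrow> z \<in> range (repl a m v) \<Longrightarrow> z \<le> v"
proof -
  assume pa: "partition a" and v: "a m \<le> v" and m: "0 < m" and z: "z \<in> range (repl a m v)"
  then have "z = v \<or> (\<exists>j\<ge>m. z = a j)" using repl_range[OF m] by blast
  then show "z \<le> v"
  proof
    assume "\<exists>j\<ge>m. z = a j"
    then obtain j where "j \<ge> m" "z = a j" by blast
    then show ?thesis using partition_mono[OF pa \<open>j \<ge> m\<close>] v by simp
  qed simp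
qed

lemma chain_dec:
  assumes "partition X" "\<And>i. x (Suc i) + X i \<le> x i + X (Suc i)" "j \<le> i"
  shows "x i \<le> x j"
proof -
  have "x (Suc n) \<le> x n" for n using assms(2)[of n] partition_mono[OF assms(1), of n "Suc n"] by simp
  then show ?thesis using lift_Suc_antimono_le[of x] assms(3) by blast
qed

lemma U1_part: "partition u \<Longrightarrow> partition (psum u (rect 1 1))"
  unfolding partition_def psum_def rect_def
proof (intro conjI allI impI)
  fix i j :: nat assume p: "(\<forall>i j. i \<le> j \<longrightarrow> u j \<le> u i) \<and> finite {i. u i \<noteq> 0}" and "i \<le> j"
  then have "u j \<le> u i" "u j \<le> u 0" by auto
  then show "u j + (if j < 1 then 1 else 0) \<le> u i + (if i < 1 then 1 else 0)" using \<open>i \<le> j\<close> by auto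
next
  assume p: "(\<forall>i j. i \<le> j \<longrightarrow> u j \<le> u i) \<and> finite {i. u i \<noteq> 0}"
  have "{i. u i + (if i < 1 then 1 else 0) \<noteq> (0::nat)} \<subseteq> insert 0 {i. u i \<noteq> 0}" by auto
  then show "finite {i. u i + (if i < 1 then 1 else 0) \<noteq> (0::nat)}" using p finite_subset by blast
qed

lemma U1_val: "psum u (rect 1 1) i = (if i = 0 then Suc (u 0) else u i)"
  by (simp add: psum_def rect_def)

lemma U1_strict: "partition u \<Longrightarrow> strict u \<Longrightarrow> strict (psum u (rect 1 1))"
proof -
  assume pu: "partition u" and su: "strict u"
  have a: "u k \<le> u 0" for k using partition_mono[OF pu, of 0] by simp
  show ?thesis unfolding strict_def U1_val
  proof (intro allI impI)
    fix i j assume h: "i \<noteq> j \<and> 0 < (if i = 0 then Suc (u 0) else u i) \<and> 0 < (if j = 0 then Suc (u 0) else u j)"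
    show "(if i = 0 then Suc (u 0) else u i) \<noteq> (if j = 0 then Suc (u 0) else u j)"
    proof (cases "i = 0 \<or> j = 0")
      case True then show ?thesis using a[of i] a[of j] h by auto
    next
      case False then show ?thesis using su h unfolding strict_def by auto
    qed
  qed
qed

lemma bar_part: "partition u \<Longrightarrow> partition (bar u)"
  unfolding partition_def bar_def
proof (intro conjI allI impI)
  fix i j :: nat assume p: "(\<forall>i j. i \<le> j \<longrightarrow> u j \<le> u i) \<and> finite {i. u i \<noteq> 0}" and "i \<le> j"
  have "u (j - 1) \<le> u (i - 1)" using p \<open>i \<le> j\<close> by simp
  moreover have "u (j - 1) \<le> u 0" using p by simp
  ultimately show "(if j = 0 then u 0 + 1 else u (j - 1)) \<le> (if i = 0 then u 0 + 1 else u (i - 1))"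
    using \<open>i \<le> j\<close> by auto
next
  assume p: "(\<forall>i j. i \<le> j \<longrightarrow> u j \<le> u i) \<and> finite {i. u i \<noteq> 0}"
  have "{i. (if i = 0 then u 0 + 1 else u (i - 1)) \<noteq> 0} \<subseteq> insert 0 (Suc ` {i. u i \<noteq> 0})"
  proof
    fix i assume "i \<in> {i. (if i = 0 then u 0 + 1 else u (i - 1)) \<noteq> 0}"
    then show "i \<in> insert 0 (Suc ` {i. u i \<noteq> 0})"
      by (cases i) auto
  qed
  then show "finite {i. (if i = 0 then u 0 + 1 else u (i - 1)) \<noteq> 0}" using p finite_subset by blast
qed

lemma bar_strict: "partition u \<Longrightarrow> strict u \<Longrightarrow> strict (bar u)"
  unfolding strict_def bar_def
proof (intro allI impI)
  fix i j assume pu: "partition u" and su: "\<forall>i j. i \<noteq> j \<and> 0 < u i \<and> 0 < u j \<longrightarrow> u i \<noteq> u j"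
    and h: "i \<noteq> j \<and> 0 < (if i = 0 then u 0 + 1 else u (i - 1)) \<and> 0 < (if j = 0 then u 0 + 1 else u (j - 1))"
  have a: "u (k - 1) \<le> u 0" for k using partition_mono[OF pu, of 0] by simp
  show "(if i = 0 then u 0 + 1 else u (i - 1)) \<noteq> (if j = 0 then u 0 + 1 else u (j - 1))"
  proof (cases "i = 0 \<or> j = 0")
    case True then show ?thesis using a[of i] a[of j] h by auto
  next
    case False
    then have "i - 1 \<noteq> j - 1" using h by auto
    then show ?thesis using su h False by auto
  qed
qed

lemma range_repl_other:
  assumes "0 < m" "z \<in> range (repl a m v)" "z \<noteq> v"
  shows "z \<in> range (repl a m v')"
  using assms repl_range by metis

lemma L1:
  assumes pa: "partition a" and pu: "partition u" and m: "0 < m" and v: "a m < v" and vv: "v \<le> v'"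
    and ch: "chain (repl a m v) (psum u (rect 1 1))"
  shows "chain (repl a m v') (psum u (rect 1 1))"
proof -
  obtain x where xr: "\<And>i. x i \<in> range (repl a m v)"
    and xi: "\<And>i. x (Suc i) + psum u (rect 1 1) i \<le> x i + psum u (rect 1 1) (Suc i)"
    using ch unfolding chain_def by blast
  define y where "y i = (if x i = v then v' else x i)" for i
  show ?thesis unfolding chain_def
  proof (intro exI conjI allI)
    fix i show "y i \<in> range (repl a m v')"
    proof (cases "x i = v")
      case True then show ?thesis using repl_range[OF m] unfolding y_def by auto
    next
      case False then show ?thesis using range_repl_other[OF m xr[of i] False] unfolding y_def by simp
    qed
  next
    fix i
    have d: "x (Suc i) \<le> x i" using chain_dec[OF U1_part[OF pu] xi, of i "Suc i"] by simp
    have le: "x i \<le> v" using repl_le[OF pa _ m xr[of i]] v by simp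
    show "y (Suc i) + psum u (rect 1 1) i \<le> y i + psum u (rect 1 1) (Suc i)"
      using xi[of i] d le vv unfolding y_def by auto
  qed
qed

lemma L2:
  assumes pa: "partition a" and pu: "partition u" and su: "strict u" and m: "0 < m" and v: "a m < v"
    and ch: "chain (repl a m v) u"
  shows "chain (repl a m (Suc v)) (psum u (rect 1 1))"
proof (cases "u 0 = 0")
  case True
  then have u0: "u i = 0" for i using partition_mono[OF pu, of 0 i] by simp
  obtain j where j: "j \<ge> m" "a j = 0" using partition_zero[OF pa] by blast
  have z: "0 \<in> range (repl a m (Suc v))" using repl_range[OF m] j by metis
  have s: "Suc v \<in> range (repl a m (Suc v))" using repl_range[OF m] by blast
  show ?thesis unfolding chain_def
    by (rule exI[of _ "\<lambda>i. if i = 0 then Suc v else 0"]) (use z s u0 in \<open>auto simp: psum_def rect_def\<close>)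
next
  case False
  obtain x where xr: "\<And>i. x i \<in> range (repl a m v)"
    and xi: "\<And>i. x (Suc i) + u i \<le> x i + u (Suc i)"
    using ch unfolding chain_def by blast
  have x0: "x 0 \<le> v" using repl_le[OF pa _ m xr[of 0]] v by simp
  have x10: "x 1 \<le> x 0" using chain_dec[OF pu xi, of 0 1] by simp
  have u10: "u 1 \<le> u 0" using partition_mono[OF pu, of 0 1] by simp
  have x1: "x 1 < v"
  proof (rule ccontr)
    assume "\<not> x 1 < v"
    then have "x 1 = v" "x 0 = v" using x0 x10 by auto
    then have "u 0 \<le> u 1" using xi[of 0] by simp
    then have "u 0 = u 1" using u10 by simp
    then show False using su False unfolding strict_def by (metis One_nat_def neq0_conv zero_neq_one)
  qed
  have xs: "x i < v" if "1 \<le> i" for i using chain_dec[OF pu xi that] x1 by simp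
  define y where "y i = (if i = 0 then Suc v else x i)" for i
  show ?thesis unfolding chain_def
  proof (intro exI conjI allI)
    fix i show "y i \<in> range (repl a m (Suc v))"
    proof (cases "i = 0")
      case True then show ?thesis using repl_range[OF m] unfolding y_def by auto
    next
      case False
      then have "x i \<noteq> v" using xs[of i] by simp
      then show ?thesis using range_repl_other[OF m xr[of i]] False unfolding y_def by simp
    qed
  next
    fix i
    show "y (Suc i) + psum u (rect 1 1) i \<le> y i + psum u (rect 1 1) (Suc i)"
      using xi[of i] x0 unfolding y_def U1_val by auto
  qed
qed

lemma L3:
  assumes pa: "partition a" and pu: "partition u" and m: "0 < m" and v: "a m < v"
    and ch: "chain (repl a m (Suc v)) (psum u (rect 1 1))"
  shows "chain (repl a m v) u"
proof -
  obtain x where xr: "\<And>i. x i \<in> range (repl a m (Suc v))"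
    and xi: "\<And>i. x (Suc i) + psum u (rect 1 1) i \<le> x i + psum u (rect 1 1) (Suc i)"
    using ch unfolding chain_def by blast
  have x0: "x 0 \<le> Suc v" using repl_le[OF pa _ m xr[of 0]] v by simp
  have u10: "u 1 \<le> u 0" using partition_mono[OF pu, of 0 1] by simp
  have i0: "x 1 + u 0 \<le> v + u 1" using xi[of 0] x0 unfolding U1_val by simp
  then have x1: "x 1 \<le> v" using u10 by simp
  have xs: "x i \<le> v" if "1 \<le> i" for i using chain_dec[OF U1_part[OF pu] xi that] x1 by simp
  define y where "y i = (if i = 0 then v else x i)" for i
  show ?thesis unfolding chain_def
  proof (intro exI conjI allI)
    fix i show "y i \<in> range (repl a m v)"
    proof (cases "i = 0")
      case True then show ?thesis using repl_range[OF m] unfolding y_def by auto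
    next
      case False
      then have "x i \<noteq> Suc v" using xs[of i] by simp
      then show ?thesis using range_repl_other[OF m xr[of i]] False unfolding y_def by simp
    qed
  next
    fix i
    show "y (Suc i) + u i \<le> y i + u (Suc i)"
      using xi[of i] i0 unfolding y_def U1_val by (cases "i = 0") auto
  qed
qed

lemma L4:
  assumes pa: "partition a" and pu: "partition u" and m: "0 < m" and am: "a m < a 0"
    and ch: "chain (repl a m (Suc (a m))) (psum u (rect 1 1))"
  shows "chain a (bar u)"
proof -
  obtain x where xr: "\<And>i. x i \<in> range (repl a m (Suc (a m)))"
    and xi: "\<And>i. x (Suc i) + psum u (rect 1 1) i \<le> x i + psum u (rect 1 1) (Suc i)"
    using ch unfolding chain_def by blast
  have x0: "x 0 \<le> Suc (a m)" using repl_le[OF pa _ m xr[of 0]] by simp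
  have u10: "u 1 \<le> u 0" using partition_mono[OF pu, of 0 1] by simp
  have i0: "x 1 + Suc (u 0) \<le> x 0 + u 1" using xi[of 0] unfolding U1_val by simp
  then have x10: "x 1 < x 0" using u10 by simp
  have xs: "x i < Suc (a m)" if "1 \<le> i" for i using chain_dec[OF U1_part[OF pu] xi that] x10 x0 by simp
  define y1 where "y1 = (if x 0 = Suc (a m) then a m else x 0)"
  have y1r: "y1 \<in> range a"
  proof (cases "x 0 = Suc (a m)")
    case True then show ?thesis unfolding y1_def by simp
  next
    case False
    then obtain j where "x 0 = a j" using repl_range[OF m] xr[of 0] by metis
    then show ?thesis using False unfolding y1_def by simp
  qed
  have y1le: "y1 \<le> a m" "x 0 \<le> Suc y1" using x0 unfolding y1_def by auto
  define y where "y i = (if i = 0 then a 0 else if i = 1 then y1 else x (i - 1))" for i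
  show ?thesis unfolding chain_def
  proof (intro exI conjI allI)
    fix i show "y i \<in> range a"
    proof (cases "i \<le> 1")
      case True then show ?thesis using y1r unfolding y_def by auto
    next
      case False
      then have "1 \<le> i - 1" by simp
      then have "x (i - 1) \<noteq> Suc (a m)" using xs[of "i - 1"] by simp
      then obtain j where "x (i - 1) = a j" using repl_range[OF m] xr[of "i - 1"] by metis
      then show ?thesis using False unfolding y_def by simp
    qed
  next
    fix i
    show "y (Suc i) + bar u i \<le> y i + bar u (Suc i)"
    proof (cases i)
      case 0 then show ?thesis using y1le am unfolding y_def bar_def by simp
    next
      case (Suc n)
      show ?thesis
      proof (cases n)
        case 0 then show ?thesis using Suc i0 y1le unfolding y_def bar_def by simp
      next
        case (Suc k)
        then show ?thesis using \<open>i = Suc n\<close> xi[of n] unfolding y_def bar_def U1_val by simp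
      qed
    qed
  qed
qed

lemma repl_part: "partition a \<Longrightarrow> a m \<le> v \<Longrightarrow> partition (repl a m v)"
proof -
  assume pa: "partition a" and v: "a m \<le> v"
  have mono: "repl a m v j \<le> repl a m v i" if ij: "i \<le> j" for i j
  proof (cases "j < m")
    case True then have "i < m" using ij by simp
    then show ?thesis using True by (simp add: repl_def)
  next
    case False
    then have "a j \<le> a m" using partition_mono[OF pa] by simp
    moreover have "a j \<le> a i" using partition_mono[OF pa ij] .
    ultimately show ?thesis using False v by (simp add: repl_def)
  qed
  have "{i. repl a m v i \<noteq> 0} \<subseteq> {..<m} \<union> {i. a i \<noteq> 0}" by (auto simp: repl_def)
  moreover have "finite {i. a i \<noteq> 0}" using pa by (simp add: partition_def)
  ultimately have "finite {i. repl a m v i \<noteq> 0}" using finite_subset by blast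
  then show ?thesis using mono unfolding partition_def by blast
qed

lemma repl_weight: "partition a \<Longrightarrow> 0 < m \<Longrightarrow> 0 < v \<Longrightarrow> a m \<le> v \<Longrightarrow> 0 < weight (repl a m v)"
proof -
  assume pa: "partition a" and m: "0 < m" and v: "0 < v" "a m \<le> v"
  have f: "finite {i. repl a m v i \<noteq> 0}" using repl_part[OF pa v(2)] by (simp add: partition_def)
  have "0 \<in> {i. repl a m v i \<noteq> 0}" using m v by (simp add: repl_def)
  then have "repl a m v 0 \<le> sum (repl a m v) {i. repl a m v i \<noteq> 0}"
    by (intro member_le_sum f) auto
  moreover have "0 < repl a m v 0" using m v by (simp add: repl_def)
  ultimately show ?thesis unfolding weight_def by linarith
qed

theorem mainTheorem11:
  fixes u a :: "nat \<Rightarrow> nat"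
  assumes "partition u" and "strict u" and "a \<in> Q u (bar u)"
  shows "\<exists>!(b, w). partition b \<and> (\<forall>i < mult a. b i = b 0) \<and> b (mult a) < b 0
            \<and> b \<in> Q u (psum u (rect 1 1))
            \<and> a = psum b (rect w (mult a))"
proof -
  note pu = assms(1) and su = assms(2)
  have pa: "partition a" and wa: "0 < weight a" and cu: "contains a u" and nb: "\<not> contains a (bar u)"
    using assms(3) by (auto simp: Q_def)
  have a0: "0 < a 0"
  proof (rule ccontr)
    assume "\<not> 0 < a 0"
    then have "a i = 0" for i using partition_mono[OF pa, of 0 i] by simp
    then show False using wa by (simp add: weight_def)
  qed
  obtain z where z: "a z = 0" using partition_zero[OF pa, of 0] by blast
  define m where "m = (LEAST i. a i \<noteq> a 0)"
  have ex: "\<exists>i. a i \<noteq> a 0" using z a0 by (intro exI[of _ z]) simp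
  have am: "a m \<noteq> a 0" unfolding m_def using ex by (rule LeastI_ex)
  have lt: "a i = a 0" if "i < m" for i using not_less_Least[OF that[unfolded m_def]] by simp
  have ge: "a i \<le> a m" if "m \<le> i" for i using partition_mono[OF pa that] .
  have am0: "a m < a 0" using am partition_mono[OF pa, of 0 m] by simp
  have Mset: "{i. a i = a 0} = {..<m}"
  proof
    show "{i. a i = a 0} \<subseteq> {..<m}"
    proof
      fix i assume "i \<in> {i. a i = a 0}"
      then show "i \<in> {..<m}" using ge[of i] am0 by (cases "m \<le> i") auto
    qed
  next
    show "{..<m} \<subseteq> {i. a i = a 0}"
    proof
      fix i assume "i \<in> {..<m}"
      then have "a i = a 0" using lt by blast
      then show "i \<in> {i. a i = a 0}" by simp
    qed
  qed
  have mult: "mult a = m" unfolding mult_def Mset by simp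
  have m0: "0 < m" using am by (cases m) auto
  define U1 where "U1 = psum u (rect 1 1)"
  have pU1: "partition U1" "strict U1" unfolding U1_def using U1_part[OF pu] U1_strict[OF pu su] by auto
  define good where "good v \<longleftrightarrow> a m < v \<and> v \<le> a 0 \<and> repl a m v \<in> Q u U1" for v
  have Ba: "repl a m (a 0) = a"
  proof
    fix i show "repl a m (a 0) i = a i" using lt[of i] by (cases "i < m") (simp_all add: repl_def)
  qed
  have Qrepl: "repl a m v \<in> Q u U1 \<longleftrightarrow> chain (repl a m v) u \<and> \<not> chain (repl a m v) U1"
    if "a m < v" for v
  proof -
    have p: "partition (repl a m v)" using repl_part[OF pa] that by simp
    have w: "0 < weight (repl a m v)" using repl_weight[OF pa m0] that by simp
    have e1: "contains (repl a m v) u \<longleftrightarrow> chain (repl a m v) u"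
      using contains_chain[OF p pu] chain_contains[OF p pu su] by blast
    have e2: "contains (repl a m v) U1 \<longleftrightarrow> chain (repl a m v) U1"
      using contains_chain[OF p pU1(1)] chain_contains[OF p pU1(1) pU1(2)] by blast
    show ?thesis unfolding Q_def using p w e1 e2 by simp
  qed
  have uniq: "v = v'" if "good v" "good v'" for v v'
  proof (rule ccontr)
    have *: False if g: "good v" "good v'" "v < v'" for v v'
    proof -
      have c: "chain (repl a m v) u" using g(1) Qrepl unfolding good_def by blast
      have "chain (repl a m (Suc v)) U1" unfolding U1_def
        using L2[OF pa pu su m0 _ c] g(1) unfolding good_def by blast
      moreover have "a m < Suc v" "Suc v \<le> v'" using g unfolding good_def by auto
      ultimately have "chain (repl a m v') U1" unfolding U1_def
        using L1[OF pa pu m0] by blast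
      then show False using g(2) Qrepl unfolding good_def by blast
    qed
    assume "v \<noteq> v'"
    then have "v < v' \<or> v' < v" by arith
    then show False using *[of v v'] *[of v' v] that by blast
  qed
  define v where "v = (LEAST v. a m < v \<and> chain (repl a m v) u)"
  have exv: "a m < a 0 \<and> chain (repl a m (a 0)) u" using am0 Ba contains_chain[OF pa pu cu] by simp
  have v1: "a m < v \<and> chain (repl a m v) u" unfolding v_def using exv by (rule LeastI)
  have v2: "v \<le> a 0" unfolding v_def using exv by (rule Least_le)
  have gv: "good v"
  proof -
    have "\<not> chain (repl a m v) U1"
    proof
      assume c: "chain (repl a m v) U1"
      show False
      proof (cases "v = Suc (a m)")
        case True
        then have "chain a (bar u)" using L4[OF pa pu m0 am0] c unfolding U1_def by simp
        then show False using nb chain_contains[OF pa bar_part[OF pu] bar_strict[OF pu su]] by blast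
      next
        case False
        then obtain v0 where v0: "v = Suc v0" "a m < v0" using v1 by (cases v) auto
        then have "chain (repl a m v0) u" using L3[OF pa pu m0 v0(2)] c unfolding U1_def by simp
        then show False using not_less_Least[of v0 "\<lambda>v. a m < v \<and> chain (repl a m v) u"]
          v0 unfolding v_def by simp
      qed
    qed
    then show ?thesis unfolding good_def using v1 v2 Qrepl by blast
  qed
  show ?thesis unfolding mult
  proof (rule ex1I[of _ "(repl a m v, a 0 - v)"])
    show "case (repl a m v, a 0 - v) of (b, w) \<Rightarrow> partition b \<and> (\<forall>i<m. b i = b 0) \<and> b m < b 0
        \<and> b \<in> Q u (psum u (rect 1 1)) \<and> a = psum b (rect w m)"
    proof (simp only: prod.case, intro conjI)
      show "partition (repl a m v)" using repl_part[OF pa] v1 by simp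
      show "\<forall>i<m. repl a m v i = repl a m v 0" using m0 by (simp add: repl_def)
      show "repl a m v m < repl a m v 0" using m0 v1 by (simp add: repl_def)
      show "repl a m v \<in> Q u (psum u (rect 1 1))" using gv unfolding good_def U1_def by simp
      show "a = psum (repl a m v) (rect (a 0 - v) m)"
      proof
        fix i show "a i = psum (repl a m v) (rect (a 0 - v) m) i"
          using lt[of i] v2 by (cases "i < m") (simp_all add: psum_def rect_def repl_def)
      qed
    qed
  next
    fix p assume h: "case p of (b, w) \<Rightarrow> partition b \<and> (\<forall>i<m. b i = b 0) \<and> b m < b 0
        \<and> b \<in> Q u (psum u (rect 1 1)) \<and> a = psum b (rect w m)"
    obtain b w where p: "p = (b, w)" by (cases p)
    have hb: "\<forall>i<m. b i = b 0" "b m < b 0" "b \<in> Q u U1" "a = psum b (rect w m)"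
      using h unfolding p U1_def prod.case by blast+
    have bge: "b i = a i" if "m \<le> i" for i
    proof -
      have "a i = psum b (rect w m) i" using hb(4) by simp
      then show ?thesis using that by (simp add: psum_def rect_def)
    qed
    have b0: "a 0 = b 0 + w"
    proof -
      have "a 0 = psum b (rect w m) 0" using hb(4) by simp
      then show ?thesis using m0 by (simp add: psum_def rect_def)
    qed
    have bB: "b = repl a m (b 0)"
    proof
      fix i show "b i = repl a m (b 0) i"
      proof (cases "i < m")
        case True
        have "b i = b 0" using hb(1) True by blast
        then show ?thesis using True unfolding repl_def by simp
      next
        case False then show ?thesis using bge[of i] by (simp add: repl_def)
      qed
    qed
    have "repl a m (b 0) \<in> Q u U1" using hb(3) bB by metis
    moreover have "a m < b 0" using hb(2) bge[of m] by simp
    moreover have "b 0 \<le> a 0" using b0 by simp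
    ultimately have "good (b 0)" unfolding good_def by blast
    then have bv: "b 0 = v" using uniq gv by blast
    then have "b = repl a m v" using bB by metis
    moreover have "w = a 0 - v" using b0 bv by simp
    ultimately show "p = (repl a m v, a 0 - v)" using p by simp
  qed
qed

end
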